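(* Let $n,k$ be positive integers, $m=kn+1$, $\delta=\frac{(m-1)(n-1)}2$, let $\Delta$ be a zero-normalized $\Gamma_{m,n}$-semimodule and $D=D(\Delta)$. Then $\mathrm{bounce}(G_{kn+1}(D))=\delta-|D|$.
   Context: $\Gamma_{m,n}=\{am+bn:a,b\in\mathbb{Z}_{\ge0}\}$. A $\Gamma_{m,n}$-semimodule is $\Delta\subset\mathbb{Z}_{\ge0}$ with $\Delta+\Gamma_{m,n}\subset\Delta$; zero-normalized means $\min\Delta=0$. Label the box with lower-left corner $(x,y)$, $x,y\in\mathbb{Z}_{\ge0}$, of the positive quadrant by $mn-m(1+x)-n(1+y)$; $D(\Delta)$ is the set of boxes whose labels lie in $\Delta\setminus\Gamma_{m,n}$ (a Young diagram in the width-$m$, height-$n$ rectangle below its diagonal). Let $a_0<a_1<\dots<a_{m-1}$ be the $m$-generators of $\Delta$ (elements $a\in\Delta$ with $a-m\notin\Delta$) and $g(x)=\#(([x,x+n)\cap\mathbb{Z})\setminus\Delta)$; then $g(a_0)\ge\dots\ge g(a_{m-1})$, and $G_{kn+1}(D)$ is the Young diagram whose column heights are $g(a_0),\dots,g(a_{m-1})$ (columns indexed $0,\dots,m-1$ from west to east, drawn in the rectangle with southwest corner $(0,0)$). Loehr's bounce path of a diagram $E$ in this rectangle: start at $(x_0,y_0)=(0,n)$; for $i=0,1,2,\dots$, from $(x_i,y_i)$ step south to $(x_i,y_i')$ where $y_i'$ is the height of column $x_i$ of $E$ (so the path stays outside $E$; this is the vertical step $v_i=y_i-y_i'$), then step east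 by $h_i=v_i+v_{i-1}+\dots+v_{i-k+1}$ (omitting terms with negative index) to $(x_{i+1},y_{i+1})=(x_i+h_i,y_i')$; stop after the south step that reaches height $0$. Then $\mathrm{bounce}(E)$ is the sum of the heights $y_i'$ of all southwest corners reached, i.e. $\sum_i\big(n-\sum_{j\le i}v_j\big)$. *)

theory Defs
  imports Main
begin

definition Gamma :: "nat \<Rightarrow> nat \<Rightarrow> nat set" where
  "Gamma m n = {a * m + b * n | a b. True}"

definition semimodule :: "nat \<Rightarrow> nat \<Rightarrow> nat set \<Rightarrow> bool" where
  "semimodule m n \<Delta> \<longleftrightarrow> (\<forall>x\<in>\<Delta>. \<forall>g\<in>Gamma m n. x + g \<in> \<Delta>)"

definition zero_normalized :: "nat set \<Rightarrow> bool" where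
  "zero_normalized \<Delta> \<longleftrightarrow> \<Delta> \<noteq> {} \<and> (LEAST x. x \<in> \<Delta>) = 0"

(* label of the box with lower-left corner (x,y) *)
definition label :: "nat \<Rightarrow> nat \<Rightarrow> nat \<times> nat \<Rightarrow> int" where
  "label m n p = int m * int n - int m * (1 + int (fst p)) - int n * (1 + int (snd p))"

definition Ddiag :: "nat \<Rightarrow> nat \<Rightarrow> nat set \<Rightarrow> (nat \<times> nat) set" where
  "Ddiag m n \<Delta> = {p. \<exists>a. label m n p = int a \<and> a \<in> \<Delta> - Gamma m n}"

definition m_generators :: "nat \<Rightarrow> nat set \<Rightarrow> nat set" where
  "m_generators m \<Delta> = {a \<in> \<Delta>. \<not> (a \<ge> m \<and> a - m \<in> \<Delta>)}"

definition gen :: "nat \<Rightarrow> nat set \<Rightarrow> nat \<Rightarrow> nat" where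
  "gen m \<Delta> i = sorted_list_of_set (m_generators m \<Delta>) ! i"

definition gfun :: "nat \<Rightarrow> nat set \<Rightarrow> nat \<Rightarrow> nat" where
  "gfun n \<Delta> x = card ({x..<x + n} - \<Delta>)"

definition Gdiag :: "nat \<Rightarrow> nat \<Rightarrow> nat set \<Rightarrow> (nat \<times> nat) set" where
  "Gdiag m n \<Delta> = {(i, y). i < m \<and> y < gfun n \<Delta> (gen m \<Delta> i)}"

definition colheight :: "(nat \<times> nat) set \<Rightarrow> nat \<Rightarrow> nat" where
  "colheight E x = card {y. (x, y) \<in> E}"

(* state before step i: (x_i, y_i, [v_0,...,v_{i-1}]) *)
fun bstate :: "nat \<Rightarrow> nat \<Rightarrow> (nat \<times> nat) set \<Rightarrow> nat \<Rightarrow> nat \<times> nat \<times> nat list" where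
  "bstate n k E 0 = (0, n, [])"
| "bstate n k E (Suc i) =
     (case bstate n k E i of (x, y, vs) \<Rightarrow>
        let y' = colheight E x; v = y - y'; vs' = vs @ [v];
            h = sum_list (take k (rev vs')) in (x + h, y', vs'))"

(* y_i' : height reached by the i-th south step *)
definition yprime :: "nat \<Rightarrow> nat \<Rightarrow> (nat \<times> nat) set \<Rightarrow> nat \<Rightarrow> nat" where
  "yprime n k E i = colheight E (fst (bstate n k E i))"

definition bounce :: "nat \<Rightarrow> nat \<Rightarrow> (nat \<times> nat) set \<Rightarrow> nat" where
  "bounce n k E = (\<Sum>i \<le> (LEAST i. yprime n k E i = 0). yprime n k E i)"

end

theory Submission
  imports Defs
begin



lemma sorted_rank:
  fixes S :: "nat set"
  assumes "finite S" "s \<in> S"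
  shows "sorted_list_of_set S ! card {t\<in>S. t < s} = s"
proof -
  define xs where "xs = sorted_list_of_set S"
  have st: "sorted_wrt (<) xs" using assms by (simp add: xs_def)
  have sx: "set xs = S" using assms by (simp add: xs_def)
  have dx: "distinct xs" using xs_def by simp
  obtain j where j: "j < length xs" "xs ! j = s" using assms sx by (metis in_set_conv_nth)
  have "{t\<in>S. t < s} = set (take j xs)"
  proof
    show "{t\<in>S. t < s} \<subseteq> set (take j xs)"
    proof
      fix t assume "t \<in> {t\<in>S. t < s}"
      then have t: "t \<in> set xs" "t < s" using sx by auto
      then obtain i where i: "i < length xs" "xs ! i = t" by (metis in_set_conv_nth)
      have "i < j"
      proof (rule ccontr)
        assume "\<not> i < j"
        then have "j \<le> i" by simp
        then have "xs ! j \<le> xs ! i" using st i j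
          by (metis le_less sorted_wrt_nth_less order.strict_implies_order)
        then show False using t i j by simp
      qed
      then show "t \<in> set (take j xs)" using i j
        by (metis in_set_conv_nth length_take min_less_iff_conj nth_take)
    qed
  next
    show "set (take j xs) \<subseteq> {t\<in>S. t < s}"
    proof
      fix t assume "t \<in> set (take j xs)"
      then obtain i where i: "i < j" "xs ! i = t" using j
        by (metis in_set_conv_nth length_take min_less_iff_conj nth_take)
      then have "t < s" using st j sorted_wrt_nth_less by fastforce
      moreover have "t \<in> S" using i j sx by (metis in_set_conv_nth order.strict_trans)
      ultimately show "t \<in> {t\<in>S. t < s}" by simp
    qed
  qed
  then have "card {t\<in>S. t < s} = j" using dx j
    by (simp add: distinct_card)
  then show ?thesis using j xs_def by simp
qed




locale SM =
  fixes n k :: nat and D :: "nat set"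
  assumes n_pos: "n > 0" and k_pos: "k > 0"
    and semi: "semimodule (k * n + 1) n D" and zn: "zero_normalized D"
begin

abbreviation "m \<equiv> k * n + 1"

lemma zero_in: "0 \<in> D"
  using zn unfolding zero_normalized_def by (metis LeastI_ex ex_in_conv)

lemma add_Gamma: "x \<in> D \<Longrightarrow> g \<in> Gamma m n \<Longrightarrow> x + g \<in> D"
  using semi unfolding semimodule_def by blast

lemma mult_m_Gamma: "j * m \<in> Gamma m n"
  unfolding Gamma_def by (rule CollectI, rule exI[of _ j], rule exI[of _ 0]) simp

lemma mult_n_Gamma: "j * n \<in> Gamma m n"
  unfolding Gamma_def by (rule CollectI, rule exI[of _ 0], rule exI[of _ j]) simp

lemma add_jm: "x \<in> D \<Longrightarrow> x + j * m \<in> D"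
  using add_Gamma mult_m_Gamma by blast

lemma add_jn: "x \<in> D \<Longrightarrow> x + j * n \<in> D"
  using add_Gamma mult_n_Gamma by blast

lemma add_m: "x \<in> D \<Longrightarrow> x + m \<in> D"
  using add_jm[of x 1] by simp

lemma add_n: "x \<in> D \<Longrightarrow> x + n \<in> D"
  using add_jn[of x 1] by simp

lemma jn_in: "j * n \<in> D"
  using add_jn[OF zero_in] by simp

lemma Gamma_char: "y \<in> Gamma m n \<longleftrightarrow> k * (y mod n) \<le> y div n"
proof
  assume "y \<in> Gamma m n"
  then obtain a b where y: "y = a * m + b * n" unfolding Gamma_def by blast
  have "y = n * (a * k + b + a div n) + a mod n"
    using y by (simp add: algebra_simps)
  then have "y mod n = a mod n" "y div n = a * k + b + a div n"
    using n_pos by simp_all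
  moreover have "k * (a mod n) \<le> a * k"
    by (metis mod_less_eq_dividend mult.commute mult_le_mono2)
  ultimately show "k * (y mod n) \<le> y div n" by (metis trans_le_add1 le_trans)
next
  assume h: "k * (y mod n) \<le> y div n"
  have "y = (y mod n) * m + (y div n - k * (y mod n)) * n"
    using h by (simp add: algebra_simps diff_mult_distrib)
  then show "y \<in> Gamma m n" unfolding Gamma_def by blast
qed

lemma Gamma_sub: "Gamma m n \<subseteq> D"
  using add_Gamma[OF zero_in] by auto

lemma big_in: assumes "k * n * n \<le> y" shows "y \<in> D"
proof -
  have "k * n \<le> y div n" using assms n_pos
    by (metis div_le_mono nonzero_mult_div_cancel_right not_gr_zero)
  moreover have "k * (y mod n) \<le> k * n" using n_pos by simp
  ultimately have "k * (y mod n) \<le> y div n" by linarith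
  then show ?thesis using Gamma_char Gamma_sub by auto
qed

lemma nongen_pred: assumes "y \<in> D" "m \<le> y" "y - m \<in> D" shows "y - 1 \<in> D"
proof -
  have "y - 1 = (y - m) + k * n" using assms(2) by simp
  then show ?thesis using add_jn[OF assms(3), of k] by (simp add: mult.commute)
qed

abbreviation "gens \<equiv> m_generators m D"

lemma gens_bound: "a \<in> gens \<Longrightarrow> a < k * n * n + m"
  unfolding m_generators_def using big_in by fastforce

lemma fin_gens: "finite gens"
  by (rule finite_subset[of _ "{..<k * n * n + m}"]) (use gens_bound in auto)

lemma zero_gen: "0 \<in> gens"
  unfolding m_generators_def using zero_in by simp

lemma gens_inj: "inj_on (\<lambda>a. a mod m) gens"
proof -
  have *: False if h: "a \<in> gens" "b \<in> gens" "a mod m = b mod m" "a < b" for a b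
  proof -
    obtain j where j: "b = a + j * m" using h(3,4)
      by (metis add.commute div_mult_mod_eq less_imp_le mod_eq_nat1E mult.commute)
    have "j \<noteq> 0" using j h(4) by auto
    then obtain i where i: "j = Suc i" by (cases j) auto
    have "a + i * m \<in> D" using h(1) add_jm unfolding m_generators_def by blast
    moreover have "b - m = a + i * m" "m \<le> b" using j i by auto
    ultimately show False using h(2) unfolding m_generators_def by auto
  qed
  show ?thesis unfolding inj_on_def
    by (metis * linorder_neqE_nat)
qed

lemma card_gens_le: "card gens \<le> m"
proof -
  have "card gens = card ((\<lambda>a. a mod m) ` gens)" using gens_inj by (simp add: card_image)
  also have "\<dots> \<le> card {..<m}" by (rule card_mono) auto
  finally show ?thesis by simp
qed

abbreviation "gf \<equiv> gfun n D"

lemma gf_step: "x \<in> D \<Longrightarrow> gf (Suc x) = gf x"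
proof -
  assume x: "x \<in> D"
  have "x + n \<in> D" using add_n x by simp
  then have "{Suc x..<Suc x + n} - D = {x..<x+n} - D" using x
    by (auto simp: less_Suc_eq) (metis Suc_leI le_neq_implies_less)
  then show ?thesis unfolding gfun_def by simp
qed

lemma gf_le_n: "gf x \<le> n"
proof -
  have "gf x \<le> card {x..<x+n}" unfolding gfun_def by (rule card_mono) auto
  then show ?thesis by simp
qed

lemma gf_mono_step: "gf (Suc x) \<le> gf x"
proof (cases "x \<in> D")
  case True then show ?thesis using gf_step by simp
next
  case False
  let ?A = "{x..<x+n} - D"
  have xA: "x \<in> ?A" using False n_pos by auto
  have "{Suc x..<Suc x + n} - D \<subseteq> insert (x + n) (?A - {x})" by auto
  then have "gf (Suc x) \<le> card (insert (x + n) (?A - {x}))"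
    unfolding gfun_def by (intro card_mono) auto
  also have "\<dots> \<le> Suc (card (?A - {x}))" by (simp add: card_insert_if)
  also have "\<dots> = card ?A"
  proof -
    have "finite ?A" by simp
    then have "card ?A > 0" using xA card_gt_0_iff by blast
    then show ?thesis using xA by simp
  qed
  finally show ?thesis unfolding gfun_def .
qed

lemma gf_mono: "x \<le> y \<Longrightarrow> gf y \<le> gf x"
  by (rule lift_Suc_antimono_le[of gf]) (use gf_mono_step in auto)

lemma gf_const: "a \<le> b \<Longrightarrow> (\<forall>z\<in>{a..<b}. z \<in> D) \<Longrightarrow> gf b = gf a"
proof (induction b)
  case 0 then show ?case by simp
next
  case (Suc b)
  show ?case
  proof (cases "a = Suc b")
    case True then show ?thesis by simp
  next
    case False
    then have "a \<le> b" using Suc.prems by simp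
    moreover have "\<forall>z\<in>{a..<b}. z \<in> D" using Suc.prems by auto
    ultimately have "gf b = gf a" using Suc.IH by blast
    moreover have "b \<in> D" using Suc.prems \<open>a \<le> b\<close> by auto
    ultimately show ?thesis using gf_step by simp
  qed
qed

lemma interval_in:
  assumes "N \<in> D" "\<forall>t\<in>gens. t \<le> N \<longrightarrow> t \<le> a"
  shows "\<forall>z. a \<le> z \<and> z \<le> N \<longrightarrow> z \<in> D"
proof -
  have *: "N - d \<in> D" if "a \<le> N - d" for d using that
  proof (induction d)
    case 0 then show ?case using assms by simp
  next
    case (Suc d)
    show ?case
    proof (cases "N - Suc d = N - d")
      case True then show ?thesis using Suc by simp
    next
      case False
    then have a: "a < N - d" using Suc.prems by simp
    have "N - d \<in> D" using Suc a by simp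
    moreover have "N - d \<notin> gens" using assms(2) a by (meson diff_le_self leD)
    ultimately have "m \<le> N - d" "N - d - m \<in> D" unfolding m_generators_def by auto
    then have "N - d - 1 \<in> D" using nongen_pred \<open>N - d \<in> D\<close> by blast
    then show ?thesis by (metis Suc_eq_plus1 diff_diff_left)
  qed
  qed
  show ?thesis
  proof (intro allI impI)
    fix z assume z: "a \<le> z \<and> z \<le> N"
    then have "z = N - (N - z)" by simp
    then show "z \<in> D" using * z by (metis)
  qed
qed

end



lemma tele_sum:
  fixes Z :: "nat \<Rightarrow> nat"
  assumes mono: "\<And>j. Z (Suc j) \<le> Z j"
  shows "a \<le> N \<Longrightarrow> (\<Sum>j\<in>{a..<N}. Z j - Z (Suc j)) = Z a - Z N"
proof (induction N)
  case 0 then show ?case by simp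
next
  case (Suc N)
  have anti: "\<And>i j. i \<le> j \<Longrightarrow> Z j \<le> Z i"
    by (rule lift_Suc_antimono_le[of Z]) (use mono in auto)
  show ?case
  proof (cases "a = Suc N")
    case True then show ?thesis by simp
  next
    case False
    then have aN: "a \<le> N" using Suc.prems by simp
    have "(\<Sum>j\<in>{a..<Suc N}. Z j - Z (Suc j)) = (\<Sum>j\<in>{a..<N}. Z j - Z (Suc j)) + (Z N - Z (Suc N))"
      using aN by simp
    also have "\<dots> = Z a - Z N + (Z N - Z (Suc N))" using Suc.IH aN by simp
    also have "\<dots> = Z a - Z (Suc N)" using anti[OF aN] mono[of N] by simp
    finally show ?thesis .
  qed
qed

lemma tele_list:
  fixes Z :: "nat \<Rightarrow> nat"
  assumes mono: "\<And>j. Z (Suc j) \<le> Z j"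
  shows "sum_list (take k (rev (map (\<lambda>j. Z j - Z (Suc j)) [0..<N]))) = Z (N - k) - Z N"
proof -
  have "take k (rev (map (\<lambda>j. Z j - Z (Suc j)) [0..<N])) = rev (map (\<lambda>j. Z j - Z (Suc j)) [N - k..<N])"
    by (simp add: take_rev drop_map)
  then have "sum_list (take k (rev (map (\<lambda>j. Z j - Z (Suc j)) [0..<N]))) = (\<Sum>j\<in>{N-k..<N}. Z j - Z (Suc j))"
    by (simp add: sum_list_rev interv_sum_list_conv_sum_set_nat)
  also have "\<dots> = Z (N - k) - Z N" by (rule tele_sum[of Z, OF mono]) simp
  finally show ?thesis .
qed

context SM begin

definition P :: "nat \<Rightarrow> nat" where "P i = card {t\<in>gens. t \<le> i * n}"
definition amax :: "nat \<Rightarrow> nat" where "amax i = Max {t\<in>gens. t \<le> i * n}"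
definition Z :: "nat \<Rightarrow> nat" where "Z j = (if j = 0 then n else gf ((j - 1) * n))"

lemma fin_le: "finite {t\<in>gens. t \<le> N}"
  using fin_gens by simp

lemma amax_props: "amax i \<in> gens" "amax i \<le> i * n" "\<forall>t\<in>gens. t \<le> i * n \<longrightarrow> t \<le> amax i"
proof -
  have ne: "{t\<in>gens. t \<le> i * n} \<noteq> {}" using zero_gen by auto
  have "amax i \<in> {t\<in>gens. t \<le> i * n}" unfolding amax_def using Max_in[OF fin_le ne] .
  then show "amax i \<in> gens" "amax i \<le> i * n" by auto
  show "\<forall>t\<in>gens. t \<le> i * n \<longrightarrow> t \<le> amax i" unfolding amax_def using fin_le by auto
qed

lemma P_eq: "P i = Suc (card {t\<in>gens. t < amax i})"
proof -
  have "{t\<in>gens. t \<le> i * n} = insert (amax i) {t\<in>gens. t < amax i}"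
  proof (intro set_eqI iffI)
    fix t assume "t \<in> {t\<in>gens. t \<le> i * n}"
    then have "t \<in> gens" "t \<le> amax i" using amax_props(3) by auto
    then show "t \<in> insert (amax i) {t\<in>gens. t < amax i}" by auto
  next
    fix t assume "t \<in> insert (amax i) {t\<in>gens. t < amax i}"
    moreover have "amax i \<in> gens" "amax i \<le> i * n" using amax_props(1,2) by auto
    ultimately show "t \<in> {t\<in>gens. t \<le> i * n}" by auto
  qed
  moreover have "finite {t\<in>gens. t < amax i}" using fin_gens by simp
  ultimately show ?thesis unfolding P_def by simp
qed

lemma P_le: "P i \<le> m"
proof -
  have "P i \<le> card gens" unfolding P_def by (rule card_mono[OF fin_gens]) auto
  then show ?thesis using card_gens_le by simp
qed

lemma gen_P: "gen m D (P i - 1) = amax i"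
  unfolding gen_def using P_eq sorted_rank[OF fin_gens amax_props(1)] by simp

lemma gf_amax: "gf (amax i) = gf (i * n)"
proof -
  have "\<forall>z. amax i \<le> z \<and> z \<le> i * n \<longrightarrow> z \<in> D"
    by (rule interval_in[OF jn_in amax_props(3)])
  then show ?thesis using gf_const[OF amax_props(2)] by auto
qed

lemma colheight_G: "colheight (Gdiag m n D) x = (if x < m then gf (gen m D x) else 0)"
proof -
  have "{y. (x, y) \<in> Gdiag m n D} = (if x < m then {..<gf (gen m D x)} else {})"
    unfolding Gdiag_def by auto
  then show ?thesis unfolding colheight_def by simp
qed

lemma Z_mono: "Z (Suc j) \<le> Z j"
proof (cases j)
  case 0 then show ?thesis unfolding Z_def using gf_le_n by simp
next
  case (Suc j')
  have "gf (j * n) \<le> gf (j' * n)" by (rule gf_mono) (simp add: Suc)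
  then show ?thesis unfolding Z_def using Suc by simp
qed

lemma window: "card ({x..<x+n} \<inter> D) + gf x = n"
proof -
  have "{x..<x+n} = ({x..<x+n} \<inter> D) \<union> ({x..<x+n} - D)" by auto
  moreover have "card (({x..<x+n} \<inter> D) \<union> ({x..<x+n} - D)) = card ({x..<x+n} \<inter> D) + card ({x..<x+n} - D)"
    by (rule card_Un_disjoint) auto
  moreover have "card {x..<x+n} = n" by simp
  ultimately show ?thesis unfolding gfun_def by simp
qed

lemma count: "card {t\<in>D. t \<le> M} = card {t\<in>gens. t \<le> M} + card {u\<in>D. u + m \<le> M}"
proof -
  have eq: "{t\<in>D. t \<le> M} = {t\<in>gens. t \<le> M} \<union> (\<lambda>u. u + m) ` {u\<in>D. u + m \<le> M}"
  proof
    show "{t\<in>D. t \<le> M} \<subseteq> {t\<in>gens. t \<le> M} \<union> (\<lambda>u. u + m) ` {u\<in>D. u + m \<le> M}"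
    proof
      fix t assume t: "t \<in> {t\<in>D. t \<le> M}"
      show "t \<in> {t\<in>gens. t \<le> M} \<union> (\<lambda>u. u + m) ` {u\<in>D. u + m \<le> M}"
      proof (cases "t \<in> gens")
        case True then show ?thesis using t by auto
      next
        case False
        then have "m \<le> t" "t - m \<in> D" using t unfolding m_generators_def by auto
        then have "t = (t - m) + m" "t - m \<in> {u\<in>D. u + m \<le> M}" using t by auto
        then show ?thesis by (metis (no_types, lifting) UnI2 image_eqI)
      qed
    qed
  next
    show "{t\<in>gens. t \<le> M} \<union> (\<lambda>u. u + m) ` {u\<in>D. u + m \<le> M} \<subseteq> {t\<in>D. t \<le> M}"
      using add_m unfolding m_generators_def by auto
  qed
  have disj: "{t\<in>gens. t \<le> M} \<inter> (\<lambda>u. u + m) ` {u\<in>D. u + m \<le> M} = {}"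
    unfolding m_generators_def by auto
  have "card ({t\<in>gens. t \<le> M} \<union> (\<lambda>u. u + m) ` {u\<in>D. u + m \<le> M})
      = card {t\<in>gens. t \<le> M} + card ((\<lambda>u. u + m) ` {u\<in>D. u + m \<le> M})"
    by (rule card_Un_disjoint[OF fin_le _ disj]) (auto intro: finite_subset[of _ "{..M}"])
  also have "card ((\<lambda>u. u + m) ` {u\<in>D. u + m \<le> M}) = card {u\<in>D. u + m \<le> M}"
    by (rule card_image) (simp add: inj_on_def)
  finally show ?thesis using eq by simp
qed

lemma P_rec: "P (Suc i) + Z (Suc i) = P i + Z (Suc i - k)"
proof -
  define M where "M = i * n"
  have MD: "M \<in> D" unfolding M_def using jn_in .
  have SM: "Suc i * n = M + n" unfolding M_def by simp
  have ZS: "Z (Suc i) = gf M" unfolding Z_def M_def by simp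
  define cw1 where "cw1 = card ({Suc M..<Suc M + n} \<inter> D)"
  have cw1: "cw1 + Z (Suc i) = n" using window[of "Suc M"] gf_step[OF MD] ZS cw1_def by simp
  have eA: "{t\<in>D. t \<le> M + n} = {t\<in>D. t \<le> M} \<union> ({Suc M..<Suc M + n} \<inter> D)" by auto
  have cA: "card {t\<in>D. t \<le> M + n} = card {t\<in>D. t \<le> M} + cw1"
    unfolding eA cw1_def by (rule card_Un_disjoint) auto
  define cw2 where "cw2 = card {u\<in>D. M < u + m \<and> u + m \<le> M + n}"
  have eB: "{u\<in>D. u + m \<le> M + n} = {u\<in>D. u + m \<le> M} \<union> {u\<in>D. M < u + m \<and> u + m \<le> M + n}" by auto
  have cB: "card {u\<in>D. u + m \<le> M + n} = card {u\<in>D. u + m \<le> M} + cw2"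
    unfolding eB cw2_def
    by (rule card_Un_disjoint) (auto intro: finite_subset[of _ "{..M+n}"])
  have cw2: "cw2 + Z (Suc i - k) = n"
  proof (cases "k \<le> i")
    case True
    define L where "L = (i - k) * n"
    have hML: "M = L + k * n" unfolding M_def L_def using True
      by (metis add_mult_distrib le_add_diff_inverse2)
    have "{u\<in>D. M < u + m \<and> u + m \<le> M + n} = {L..<L+n} \<inter> D"
      unfolding hML by auto
    moreover have "Z (Suc i - k) = gf L" unfolding Z_def L_def using True
      by (simp add: Suc_diff_le)
    ultimately show ?thesis using window[of L] cw2_def by (simp add: Int_commute)
  next
    case False
    have "Suc i \<le> k" using False by simp
    then have "Suc i * n \<le> k * n" by (rule mult_le_mono1)
    then have e0: "{u\<in>D. M < u + m \<and> u + m \<le> M + n} = {}" using SM by auto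
    have "cw2 = 0" unfolding cw2_def e0 by simp
    moreover have "Z (Suc i - k) = n" unfolding Z_def using False by simp
    ultimately show ?thesis by simp
  qed
  have c1: "card {t\<in>D. t \<le> M} = P i + card {u\<in>D. u + m \<le> M}"
    using count[of M] unfolding P_def M_def by simp
  have c2: "card {t\<in>D. t \<le> M + n} = P (Suc i) + card {u\<in>D. u + m \<le> M + n}"
    using count[of "M + n"] unfolding P_def SM by simp
  show ?thesis using c1 c2 cA cB cw1 cw2 by linarith
qed

lemma P0: "P 0 = 1"
proof -
  have "{t\<in>gens. t \<le> 0 * n} = {0}" using zero_gen by auto
  then show ?thesis unfolding P_def by simp
qed

lemma P_ge1: "1 \<le> P i"
  using P_eq by simp

lemma bstate_eq:
  "bstate n k (Gdiag m n D) i = (P i - 1, Z i, map (\<lambda>j. Z j - Z (Suc j)) [0..<i])"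
proof (induction i)
  case 0 then show ?case using P0 unfolding Z_def by simp
next
  case (Suc i)
  have lt: "P i - 1 < m" using P_le[of i] P_ge1[of i] by linarith
  have y': "colheight (Gdiag m n D) (P i - 1) = Z (Suc i)"
    using colheight_G lt gen_P gf_amax unfolding Z_def by simp
  have h: "sum_list (take k (rev (map (\<lambda>j. Z j - Z (Suc j)) [0..<Suc i]))) = Z (Suc i - k) - Z (Suc i)"
    by (rule tele_list) (rule Z_mono)
  have anti: "Z (Suc i) \<le> Z (Suc i - k)"
    by (rule lift_Suc_antimono_le[of Z]) (use Z_mono in auto)
  have x': "P i - 1 + (Z (Suc i - k) - Z (Suc i)) = P (Suc i) - 1"
    using P_rec[of i] P_ge1[of i] P_ge1[of "Suc i"] anti by linarith
  show ?case using Suc.IH y' h x' by (simp add: Let_def)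
qed

lemma yprime_eq: "yprime n k (Gdiag m n D) i = gf (i * n)"
proof -
  have lt: "P i - 1 < m" using P_le[of i] P_ge1[of i] by linarith
  show ?thesis unfolding yprime_def bstate_eq using colheight_G lt gen_P gf_amax by simp
qed

end



lemma two_sum: "2 * (\<Sum>r<n. r) = (n::nat) * (n - 1)"
proof (induction n)
  case 0 then show ?case by simp
next
  case (Suc n)
  have "2 * (\<Sum>r<Suc n. r) = 2 * (\<Sum>r<n. r) + 2 * n" by simp
  also have "\<dots> = n * (n - 1) + 2 * n" using Suc by simp
  also have "\<dots> = Suc n * n" by (cases n) auto
  finally show ?case by simp
qed

context SM begin

lemma gf_big: "gf ((k * n) * n) = 0"
proof -
  have "{k * n * n..<k * n * n + n} - D = {}" using big_in by auto
  then show ?thesis unfolding gfun_def by simp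
qed

lemma t1: assumes "gf (L * n) = 0" shows "{L * n..<L * n + n} - D = {}"
proof -
  have fin: "finite ({L * n..<L * n + n} - D)" by simp
  have "card ({L * n..<L * n + n} - D) = 0" using assms unfolding gfun_def .
  then show "{L * n..<L * n + n} - D = {}" using fin card_0_eq by blast
qed
lemma t2: assumes w: "\<And>z. L * n \<le> z \<Longrightarrow> z < L * n + n \<Longrightarrow> z \<in> D"
  shows "L * n \<le> x \<Longrightarrow> x \<in> D"
proof (induction x rule: less_induct)
    case (less x)
    show ?case
    proof (cases "x < L * n + n")
      case True then show ?thesis using w less.prems by blast
    next
      case False
      then have "x - n < x" "L * n \<le> x - n" using n_pos by auto
      then have "x - n \<in> D" using less.IH by blast
      moreover have "x - n + n = x" using False by simp
      ultimately show ?thesis using add_n[of "x - n"] by simp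
    qed
qed
lemma tail_in: assumes "gf (L * n) = 0" "L * n \<le> x" shows "x \<in> D"
proof -
  have e: "{L * n..<L * n + n} - D = {}" by (rule t1[OF assms(1)])
  have w: "z \<in> D" if "L * n \<le> z" "z < L * n + n" for z
  proof -
    have "z \<in> {L * n..<L * n + n}" using that by simp
    then show ?thesis using e by (metis Diff_iff empty_iff)
  qed
  show ?thesis by (rule t2[OF w assms(2)])
qed

lemma gapcount: "card ({..<j * n} - D) = (\<Sum>i<j. gf (i * n))"
proof (induction j)
  case 0 then show ?case by simp
next
  case (Suc j)
  have "{..<Suc j * n} - D = ({..<j * n} - D) \<union> ({j * n..<j * n + n} - D)" by auto
  moreover have "card (({..<j * n} - D) \<union> ({j * n..<j * n + n} - D)) = card ({..<j * n} - D) + card ({j * n..<j * n + n} - D)"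
    by (rule card_Un_disjoint) auto
  ultimately show ?case using Suc unfolding gfun_def by simp
qed

lemma Gamma_gaps: "card (UNIV - Gamma m n) = k * (\<Sum>r<n. r)"
proof -
  let ?S = "Sigma {..<n} (\<lambda>r. {..<k * r})"
  let ?f = "\<lambda>(r, q). q * n + r"
  have inj: "inj_on ?f ?S"
  proof (rule inj_onI)
    fix a b assume ha: "a \<in> ?S" "b \<in> ?S" "?f a = ?f b"
    obtain r q where a: "a = (r, q)" by (cases a)
    obtain r' q' where b: "b = (r', q')" by (cases b)
    have r: "r < n" "r' < n" using ha a b by auto
    have e: "q * n + r = q' * n + r'" using ha(3) a b by simp
    have "r = (q * n + r) mod n" using r by simp
    also have "\<dots> = (q' * n + r') mod n" using e by simp
    also have "\<dots> = r'" using r by simp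
    finally have rr: "r = r'" .
    then have "q * n = q' * n" using e by simp
    then have "q = q'" using n_pos by simp
    then show "a = b" using a b rr by simp
  qed
  have img: "?f ` ?S = UNIV - Gamma m n"
  proof (intro set_eqI iffI)
    fix x assume "x \<in> ?f ` ?S"
    then obtain r q where h: "r < n" "q < k * r" "x = q * n + r" by auto
    then have "x mod n = r" "x div n = q" by auto
    then show "x \<in> UNIV - Gamma m n" using h Gamma_char by auto
  next
    fix x assume "x \<in> UNIV - Gamma m n"
    then have "x div n < k * (x mod n)" using Gamma_char by auto
    moreover have "x mod n < n" using n_pos by simp
    moreover have "x = ?f (x mod n, x div n)" by simp
    ultimately show "x \<in> ?f ` ?S" by blast
  qed
  have "card (UNIV - Gamma m n) = card ?S" using card_image[OF inj] img by simp
  also have "\<dots> = (\<Sum>r<n. k * r)" by (simp add: card_SigmaI)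
  finally show ?thesis by (simp add: sum_distrib_left)
qed

end


context SM begin

lemma big_Gamma: "k * n * n \<le> y \<Longrightarrow> y \<in> Gamma m n"
proof -
  assume h: "k * n * n \<le> y"
  have "k * n \<le> y div n" using h n_pos
    by (metis div_le_mono nonzero_mult_div_cancel_right not_gr_zero)
  moreover have "k * (y mod n) \<le> k * n" using n_pos by simp
  ultimately have "k * (y mod n) \<le> y div n" by linarith
  then show ?thesis using Gamma_char by auto
qed

lemma fin_Gamma_gaps: "finite (UNIV - Gamma m n)"
proof -
  have "UNIV - Gamma m n \<subseteq> {..<k * n * n}"
  proof
    fix y assume "y \<in> UNIV - Gamma m n"
    then show "y \<in> {..<k * n * n}" using big_Gamma by (meson DiffD2 lessThan_iff not_le)
  qed
  then show ?thesis by (rule finite_subset) simp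
qed

lemma label_x: assumes "label m n (x, y) = int a" shows "x < n"
proof -
  have h: "int m * int n - int m * (1 + int x) - int n * (1 + int y) = int a"
    using assms by (simp only: label_def fst_conv snd_conv)
  have "0 < int n * (1 + int y)" using n_pos by simp
  then have "int m * (1 + int x) < int m * int n" using h by linarith
  then have "1 + int x < int n" by (simp add: mult_less_cancel_left)
  then show ?thesis by simp
qed

lemma label_inj: assumes "label m n (x, y) = label m n (x', y')" "x < n" "x' < n"
  shows "x = x' \<and> y = y'"
proof -
  have e: "int m * (1 + int x) + int n * (1 + int y) = int m * (1 + int x') + int n * (1 + int y')"
    using assms(1) unfolding label_def by simp
  have "int x - int x' = int n * (int k * (int x' - int x) + int y' - int y)"
    using e by (simp add: algebra_simps)
  then obtain t where t: "int x - int x' = int n * t" by blast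
  have "t = 0"
  proof (rule ccontr)
    assume "t \<noteq> 0"
    then have "\<bar>int n * t\<bar> \<ge> int n" using n_pos
      by (simp add: abs_mult)
    moreover have "\<bar>int x - int x'\<bar> < int n" using assms(2,3) by linarith
    ultimately show False using t by simp
  qed
  then have "x = x'" using t by simp
  then have "int n * (1 + int y) = int n * (1 + int y')" using e by simp
  then have "y = y'" using n_pos by simp
  then show ?thesis using \<open>x = x'\<close> by simp
qed

lemma Ddiag_card: "card (Ddiag m n D) = card (D - Gamma m n)"
proof -
  let ?f = "\<lambda>p. nat (label m n p)"
  have inj: "inj_on ?f (Ddiag m n D)"
  proof (rule inj_onI)
    fix p q assume hp: "p \<in> Ddiag m n D" and hq: "q \<in> Ddiag m n D" and e: "?f p = ?f q"
    obtain x y where p: "p = (x, y)" by (cases p)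
    obtain x' y' where q: "q = (x', y')" by (cases q)
    obtain a where a: "label m n p = int a" using hp unfolding Ddiag_def by blast
    obtain b where b: "label m n q = int b" using hq unfolding Ddiag_def by blast
    have "label m n p = label m n q" using e a b by simp
    moreover have "x < n" "x' < n" using label_x a b p q by auto
    ultimately show "p = q" using label_inj p q by simp
  qed
  have img: "?f ` Ddiag m n D = D - Gamma m n"
  proof (intro set_eqI iffI)
    fix a assume "a \<in> ?f ` Ddiag m n D"
    then obtain p where "p \<in> Ddiag m n D" "a = ?f p" by blast
    then show "a \<in> D - Gamma m n" unfolding Ddiag_def by auto
  next
    fix a assume ha: "a \<in> D - Gamma m n"
    define r where "r = a mod n"
    define q where "q = a div n"
    have qr: "q < k * r" using ha Gamma_char unfolding q_def r_def by auto
    have r1: "1 \<le> r" using qr by (cases r) auto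
    have rn: "r < n" unfolding r_def using n_pos by simp
    have aqr: "int a = int q * int n + int r" unfolding q_def r_def
      by (metis of_nat_add of_nat_mult div_mult_mod_eq)
    define p where "p = (n - Suc r, k * r - Suc q)"
    have i1: "int (n - Suc r) = int n - int r - 1" using rn r1 by simp
    have i2: "int (k * r - Suc q) = int k * int r - int q - 1" using qr by simp
    have "label m n p = int a"
      unfolding label_def p_def fst_conv snd_conv i1 i2 using aqr by (simp add: algebra_simps)
    then have "p \<in> Ddiag m n D" "?f p = a" using ha unfolding Ddiag_def by auto
    then show "a \<in> ?f ` Ddiag m n D" by (metis image_eqI)
  qed
  show ?thesis using card_image[OF inj] img by simp
qed

end


context SM begin

theorem main_loc:
  "(\<exists>i. yprime n k (Gdiag m n D) i = 0) \<and>
   int (bounce n k (Gdiag m n D)) = int ((m - 1) * (n - 1) div 2) - int (card (Ddiag m n D))"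
proof -
  let ?E = "Gdiag m n D"
  have yp: "\<And>i. yprime n k ?E i = gf (i * n)" using yprime_eq .
  have ex: "\<exists>i. yprime n k ?E i = 0" using yp gf_big by metis
  define L where "L = (LEAST i. yprime n k ?E i = 0)"
  have gL: "gf (L * n) = 0" using LeastI_ex[OF ex] yp unfolding L_def by simp
  have "bounce n k ?E = (\<Sum>i\<le>L. gf (i * n))" unfolding bounce_def L_def[symmetric] using yp by simp
  also have "\<dots> = (\<Sum>i<Suc L. gf (i * n))" by (simp add: lessThan_Suc_atMost)
  also have "\<dots> = card ({..<Suc L * n} - D)" using gapcount[of "Suc L"] by (simp only:)
  also have "{..<Suc L * n} - D = UNIV - D"
  proof (intro set_eqI iffI)
    fix x assume "x \<in> UNIV - D"
    then have "\<not> L * n \<le> x" using tail_in[OF gL] by blast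
    then show "x \<in> {..<Suc L * n} - D" using \<open>x \<in> UNIV - D\<close> by simp
  qed auto
  finally have b: "bounce n k ?E = card (UNIV - D)" .
  have u: "UNIV - Gamma m n = (UNIV - D) \<union> (D - Gamma m n)" using Gamma_sub by auto
  have f1: "finite (UNIV - D)" using fin_Gamma_gaps Gamma_sub by (meson Diff_mono finite_subset order_refl)
  have f2: "finite (D - Gamma m n)" using fin_Gamma_gaps by (meson Diff_mono finite_subset subset_UNIV order_refl)
  have c: "card (UNIV - Gamma m n) = card (UNIV - D) + card (D - Gamma m n)"
    unfolding u by (rule card_Un_disjoint[OF f1 f2]) auto
  have d: "(m - 1) * (n - 1) div 2 = k * (\<Sum>r<n. r)"
  proof -
    have e: "(m - 1) * (n - 1) = 2 * (k * (\<Sum>r<n. r))" using two_sum[of n] by (simp add: algebra_simps)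
    show ?thesis unfolding e by simp
  qed
  have nat_eq: "bounce n k ?E + card (Ddiag m n D) = (m - 1) * (n - 1) div 2"
    unfolding b d Ddiag_card using c Gamma_gaps by linarith
  have "int (bounce n k ?E) + int (card (Ddiag m n D)) = int ((m - 1) * (n - 1) div 2)"
    unfolding nat_eq[symmetric] by (rule of_nat_add[symmetric])
  then have "int (bounce n k ?E) = int ((m - 1) * (n - 1) div 2) - int (card (Ddiag m n D))"
    by linarith
  then show ?thesis using ex by simp
qed

end

theorem mainTheorem17:
  fixes n k :: nat and \<Delta> :: "nat set"
  assumes "n > 0" and "k > 0"
    and "semimodule (k * n + 1) n \<Delta>"
    and "zero_normalized \<Delta>"
  shows "(\<exists>i. yprime n k (Gdiag (k * n + 1) n \<Delta>) i = 0) \<and>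
         int (bounce n k (Gdiag (k * n + 1) n \<Delta>))
           = int (((k * n + 1) - 1) * (n - 1) div 2) - int (card (Ddiag (k * n + 1) n \<Delta>))"
proof -
  interpret SM n k \<Delta> using assms by unfold_locales
  show ?thesis using main_loc .
qed



end
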